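(* Let $\Lambda$ be a finite set of sites and $N\ge1$. For each unordered pair $\langle xy\rangle$ of distinct sites let $\mathcal{V}_{xy}:[-1,1]\to\mathbb{R}$ be a function, and let $H(\{\sigma\})=-\sum_{\langle xy\rangle}\mathcal{V}_{xy}(\sigma_x\cdot\sigma_y)$ for $\sigma=(\sigma_x)_{x\in\Lambda}$, $\sigma_x\in S^{N-1}\subset\mathbb{R}^N$. Let $\mu$ be a nonnegative measure on $(S^{N-1})^\Lambda$ that is invariant under all transformations $\sigma_x\mapsto\eta_x\sigma_x$ with $\eta_x=\pm1$, and let $\langle\cdot\rangle_{H,\mu}$ denote expectation with respect to the probability measure $Z^{-1}e^{-H(\{\sigma\})}d\mu(\{\sigma\})$ (assumed normalizable). Set $\mathcal{V}^-_{xy}(s)=\tfrac12(\mathcal{V}_{xy}(s)-\mathcal{V}_{xy}(-s))$ and $J_{xy}=\sup_{s\in[-1,1]}|\mathcal{V}^-_{xy}(s)|$. Then for any sites $x_1,y_1,\dots,x_n,y_n\in\Lambda$, $$\big|\langle(\sigma_{x_1}\cdot\sigma_{y_1})\cdots(\sigma_{x_n}\cdot\sigma_{y_n})\rangle_{H,\mu}\big|\le \langle\varepsilon_{x_1}\varepsilon_{y_1}\cdots\varepsilon_{x_n}\varepsilon_{y_n}\rangle_{\mathrm{Ising},J}\,\langle|\sigma_{x_1}\cdot\sigma_{y_1}|\cdots|\sigma_{x_n}\cdot\sigma_{y_n}|\rangle_{H,\mu}$$ $$\le \langle\varepsilon_{x_1}\varepsilon_{y_1}\cdots\varepsilon_{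x_n}\varepsilon_{y_n}\rangle_{\mathrm{Ising},J}\,\langle(\sigma_{x_1}\cdot\sigma_{y_1})^2\cdots(\sigma_{x_n}\cdot\sigma_{y_n})^2\rangle_{H,\mu}^{1/2}\le\langle\varepsilon_{x_1}\varepsilon_{y_1}\cdots\varepsilon_{x_n}\varepsilon_{y_n}\rangle_{\mathrm{Ising},J}.$$
   Context: $\langle\cdot\rangle_{\mathrm{Ising},J}$ denotes expectation in the Ising model on $\Lambda$ with spins $\varepsilon_x\in\{\pm1\}$ and pair couplings $J_{xy}$: $\langle F\rangle_{\mathrm{Ising},J}=\sum_{\varepsilon}F(\varepsilon)e^{\sum_{\langle xy\rangle}J_{xy}\varepsilon_x\varepsilon_y}\big/\sum_{\varepsilon}e^{\sum_{\langle xy\rangle}J_{xy}\varepsilon_x\varepsilon_y}$, the sums running over $\varepsilon\in\{\pm1\}^\Lambda$. *)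

theory Defs
  imports "HOL-Analysis.Analysis"
begin

text \<open>Sites: a finite linearly ordered type 'a (the order is only used to enumerate
unordered pairs x < y once). Spins: vectors in real^'n, N = CARD('n) \<ge> 1.\<close>

definition hamiltonian :: "('a::{finite,linorder} \<Rightarrow> 'a \<Rightarrow> real \<Rightarrow> real)
    \<Rightarrow> ('a \<Rightarrow> real^'n) \<Rightarrow> real" where
  "hamiltonian V \<sigma> = - (\<Sum>(x,y)\<in>{(x,y). x < y}. V x y (\<sigma> x \<bullet> \<sigma> y))"

definition partition_fn :: "('a \<Rightarrow> real^'n) measure \<Rightarrow> (('a \<Rightarrow> real^'n) \<Rightarrow> real) \<Rightarrow> ennreal" where
  "partition_fn \<mu> H = (\<integral>\<^sup>+ \<sigma>. ennreal (exp (- H \<sigma>)) \<partial>\<mu>)"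

definition gibbs_expect :: "('a \<Rightarrow> real^'n) measure \<Rightarrow> (('a \<Rightarrow> real^'n) \<Rightarrow> real)
    \<Rightarrow> (('a \<Rightarrow> real^'n) \<Rightarrow> real) \<Rightarrow> real" where
  "gibbs_expect \<mu> H F = (\<integral>\<sigma>. F \<sigma> * exp (- H \<sigma>) \<partial>\<mu>) / enn2real (partition_fn \<mu> H)"

definition Vminus :: "(real \<Rightarrow> real) \<Rightarrow> real \<Rightarrow> real" where
  "Vminus v s = (v s - v (- s)) / 2"

definition Jcoupling :: "('a \<Rightarrow> 'a \<Rightarrow> real \<Rightarrow> real) \<Rightarrow> 'a \<Rightarrow> 'a \<Rightarrow> real" where
  "Jcoupling V x y = (SUP s\<in>{-1..1}. \<bar>Vminus (V x y) s\<bar>)"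

definition ising_configs :: "('a \<Rightarrow> real) set" where
  "ising_configs = {\<epsilon>. \<forall>x. \<epsilon> x = 1 \<or> \<epsilon> x = -1}"

definition ising_weight :: "('a::{finite,linorder} \<Rightarrow> 'a \<Rightarrow> real) \<Rightarrow> ('a \<Rightarrow> real) \<Rightarrow> real" where
  "ising_weight J \<epsilon> = exp (\<Sum>(x,y)\<in>{(x,y). x < y}. J x y * \<epsilon> x * \<epsilon> y)"

definition ising_expect :: "('a::{finite,linorder} \<Rightarrow> 'a \<Rightarrow> real) \<Rightarrow> (('a \<Rightarrow> real) \<Rightarrow> real) \<Rightarrow> real" where
  "ising_expect J F = (\<Sum>\<epsilon>\<in>ising_configs. F \<epsilon> * ising_weight J \<epsilon>)
                      / (\<Sum>\<epsilon>\<in>ising_configs. ising_weight J \<epsilon>)"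

end

theory Submission
  imports Defs
begin

definition spinmon :: "('a \<Rightarrow> nat) \<Rightarrow> ('a::finite \<Rightarrow> real) \<Rightarrow> real" where
  "spinmon m \<tau> = (\<Prod>x\<in>UNIV. \<tau> x ^ m x)"

lemma configs_eq: "ising_configs = Pi UNIV (\<lambda>_. {1, -1::real})"
  unfolding ising_configs_def by auto

lemma configs_finite: "finite (ising_configs :: ('a::finite \<Rightarrow> real) set)"
proof -
  have "Pi UNIV (\<lambda>_::'a. {1, -1::real}) = PiE UNIV (\<lambda>_. {1, -1})"
    by (simp add: PiE_def extensional_def)
  then show ?thesis unfolding configs_eq by (simp add: finite_PiE)
qed

lemma spin_cases: "\<tau> \<in> ising_configs \<Longrightarrow> \<tau> x = 1 \<or> \<tau> x = -1"
  unfolding ising_configs_def by auto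

lemma spinmon_split: "spinmon m \<tau> = \<tau> x ^ m x * (\<Prod>z\<in>UNIV-{x}. \<tau> z ^ m z)"
  unfolding spinmon_def by (rule prod.remove) auto

lemma spinmon_times: "spinmon m \<tau> * \<tau> x = spinmon (m(x := Suc (m x))) \<tau>"
proof -
  have "spinmon (m(x := Suc (m x))) \<tau> = \<tau> x ^ Suc (m x) * (\<Prod>z\<in>UNIV-{x}. \<tau> z ^ (m(x := Suc (m x))) z)"
    using spinmon_split[of "m(x := Suc (m x))" \<tau> x] by simp
  also have "(\<Prod>z\<in>UNIV-{x}. \<tau> z ^ (m(x := Suc (m x))) z) = (\<Prod>z\<in>UNIV-{x}. \<tau> z ^ m z)"
    by (rule prod.cong) auto
  finally have A: "spinmon (m(x := Suc (m x))) \<tau> = \<tau> x ^ Suc (m x) * (\<Prod>z\<in>UNIV-{x}. \<tau> z ^ m z)" .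
  have B: "spinmon m \<tau> = \<tau> x ^ m x * (\<Prod>z\<in>UNIV-{x}. \<tau> z ^ m z)" by (rule spinmon_split)
  show ?thesis unfolding A B by (simp add: algebra_simps)
qed

lemma spinmon_mult: "spinmon m (\<lambda>x. \<tau> x * \<xi> x) = spinmon m \<tau> * spinmon m \<xi>"
  unfolding spinmon_def by (simp add: power_mult_distrib prod.distrib)

lemma spinmon_abs: "\<xi> \<in> ising_configs \<Longrightarrow> \<bar>spinmon m \<xi>\<bar> = 1"
proof -
  assume a: "\<xi> \<in> ising_configs"
  have "\<bar>\<xi> x ^ m x\<bar> = 1" for x using spin_cases[OF a, of x] by (auto simp: power_abs)
  then show ?thesis unfolding spinmon_def abs_prod by simp
qed

lemma flip_configs: "\<tau> \<in> ising_configs \<Longrightarrow> \<tau>(x := - \<tau> x) \<in> ising_configs"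
  unfolding ising_configs_def by auto

lemma sum_spinmon_nonneg: "0 \<le> (\<Sum>\<tau>\<in>ising_configs. spinmon m (\<tau>::'a::finite \<Rightarrow> real))"
proof (cases "\<forall>x. even (m x)")
  case True
  have "spinmon m \<tau> \<ge> 0" for \<tau> unfolding spinmon_def
    using True by (intro prod_nonneg) (auto simp: zero_le_even_power)
  then show ?thesis by (intro sum_nonneg) auto
next
  case False
  then obtain x where ox: "odd (m x)" by auto
  let ?f = "\<lambda>\<tau>::'a \<Rightarrow> real. \<tau>(x := - \<tau> x)"
  have fl: "spinmon m (?f \<tau>) = - spinmon m \<tau>" for \<tau>
  proof -
    have "spinmon m (?f \<tau>) = (?f \<tau>) x ^ m x * (\<Prod>z\<in>UNIV-{x}. (?f \<tau>) z ^ m z)"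
      by (rule spinmon_split)
    also have "(\<Prod>z\<in>UNIV-{x}. (?f \<tau>) z ^ m z) = (\<Prod>z\<in>UNIV-{x}. \<tau> z ^ m z)"
      by (rule prod.cong) auto
    also have "(?f \<tau>) x ^ m x = - (\<tau> x ^ m x)" using ox by simp
    finally have A: "spinmon m (?f \<tau>) = - (\<tau> x ^ m x) * (\<Prod>z\<in>UNIV-{x}. \<tau> z ^ m z)" .
    have B: "spinmon m \<tau> = \<tau> x ^ m x * (\<Prod>z\<in>UNIV-{x}. \<tau> z ^ m z)" by (rule spinmon_split)
    show ?thesis unfolding A B by simp
  qed
  have "(\<Sum>\<tau>\<in>ising_configs. spinmon m \<tau>) = (\<Sum>\<tau>\<in>ising_configs. spinmon m (?f \<tau>))"
    by (rule sum.reindex_bij_witness[where i = ?f and j = ?f]) (auto simp: flip_configs)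
  also have "\<dots> = - (\<Sum>\<tau>\<in>ising_configs. spinmon m \<tau>)" by (simp add: fl sum_negf)
  finally show ?thesis by simp
qed

lemma exp_spin: "t = 1 \<or> t = -1 \<Longrightarrow> exp (c * t) = cosh c + sinh c * t"
  using cosh_plus_sinh[of c] cosh_minus_sinh[of c] by auto

lemma gks1_gen:
  fixes c :: "'a::finite \<times> 'a \<Rightarrow> real"
  assumes "finite E" "\<forall>p\<in>E. 0 \<le> c p"
  shows "0 \<le> (\<Sum>\<tau>\<in>ising_configs. spinmon m \<tau> * exp (\<Sum>p\<in>E. c p * \<tau> (fst p) * \<tau> (snd p)))"
  using assms
proof (induction E arbitrary: m rule: finite_induct)
  case empty
  then show ?case using sum_spinmon_nonneg by simp
next
  case (insert e E)
  obtain x y where e: "e = (x, y)" by fastforce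
  let ?m2 = "(m(x := Suc (m x)))(y := Suc ((m(x := Suc (m x))) y))"
  let ?W = "\<lambda>\<tau>. exp (\<Sum>p\<in>E. c p * \<tau> (fst p) * \<tau> (snd p))"
  have eq: "spinmon m \<tau> * exp (\<Sum>p\<in>insert e E. c p * \<tau> (fst p) * \<tau> (snd p))
     = cosh (c e) * (spinmon m \<tau> * ?W \<tau>) + sinh (c e) * (spinmon ?m2 \<tau> * ?W \<tau>)"
    if "\<tau> \<in> ising_configs" for \<tau>
  proof -
    have t: "\<tau> x * \<tau> y = 1 \<or> \<tau> x * \<tau> y = -1"
      using spin_cases[OF that, of x] spin_cases[OF that, of y] by auto
    have "exp (\<Sum>p\<in>insert e E. c p * \<tau> (fst p) * \<tau> (snd p)) = exp (c e * (\<tau> x * \<tau> y)) * ?W \<tau>"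
      using insert.hyps by (simp add: e exp_add mult.assoc)
    also have "\<dots> = (cosh (c e) + sinh (c e) * (\<tau> x * \<tau> y)) * ?W \<tau>"
      using exp_spin[OF t] by simp
    finally have "spinmon m \<tau> * exp (\<Sum>p\<in>insert e E. c p * \<tau> (fst p) * \<tau> (snd p))
       = cosh (c e) * (spinmon m \<tau> * ?W \<tau>) + sinh (c e) * ((spinmon m \<tau> * \<tau> x * \<tau> y) * ?W \<tau>)"
      by (simp add: algebra_simps)
    also have "spinmon m \<tau> * \<tau> x * \<tau> y = spinmon ?m2 \<tau>" by (simp add: spinmon_times)
    finally show ?thesis .
  qed
  have ce: "0 \<le> c e" using insert.prems by simp
  have h1: "0 \<le> (\<Sum>\<tau>\<in>ising_configs. spinmon m \<tau> * ?W \<tau>)"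
    by (rule insert.IH) (use insert.prems in auto)
  have h2: "0 \<le> (\<Sum>\<tau>\<in>ising_configs. spinmon ?m2 \<tau> * ?W \<tau>)"
    by (rule insert.IH) (use insert.prems in auto)
  have h3: "0 \<le> cosh (c e)" "0 \<le> sinh (c e)" using ce by (auto intro: order.strict_implies_order[OF cosh_real_pos])
  have "0 \<le> cosh (c e) * (\<Sum>\<tau>\<in>ising_configs. spinmon m \<tau> * ?W \<tau>) + sinh (c e) * (\<Sum>\<tau>\<in>ising_configs. spinmon ?m2 \<tau> * ?W \<tau>)"
    using h1 h2 h3 by simp
  also have "\<dots> = (\<Sum>\<tau>\<in>ising_configs. spinmon m \<tau> * exp (\<Sum>p\<in>insert e E. c p * \<tau> (fst p) * \<tau> (snd p)))"
    by (simp add: eq sum.distrib sum_distrib_left)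
  finally show ?case .
qed

lemma configs_ne: "(\<lambda>_. 1) \<in> ising_configs"
  unfolding ising_configs_def by auto

lemma ising_weight_pos: "0 < ising_weight J \<tau>"
  unfolding ising_weight_def by simp

lemma Z_ising_pos: "0 < (\<Sum>\<tau>\<in>(ising_configs::('a::{finite,linorder} \<Rightarrow> real) set). ising_weight J \<tau>)"
  by (rule sum_pos) (use configs_finite configs_ne ising_weight_pos in auto)

lemma gks1:
  fixes c :: "'a::{finite,linorder} \<Rightarrow> 'a \<Rightarrow> real"
  assumes "\<And>x y. x < y \<Longrightarrow> 0 \<le> c x y"
  shows "0 \<le> (\<Sum>\<tau>\<in>ising_configs. spinmon m \<tau> * ising_weight c \<tau>)"
proof -
  have "0 \<le> (\<Sum>\<tau>\<in>ising_configs. spinmon m \<tau> * exp (\<Sum>p\<in>{(x,y). x < y}. c (fst p) (snd p) * \<tau> (fst p) * \<tau> (snd p)))"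
    by (rule gks1_gen) (use assms in auto)
  then show ?thesis unfolding ising_weight_def by (simp add: split_def)
qed

lemma ising_weight_mult:
  fixes J K :: "'a::{finite,linorder} \<Rightarrow> 'a \<Rightarrow> real"
  shows "ising_weight J \<tau> * ising_weight K (\<lambda>x. \<tau> x * \<xi> x)
    = ising_weight (\<lambda>x y. J x y + K x y * \<xi> x * \<xi> y) \<tau>"
  unfolding ising_weight_def exp_add[symmetric] sum.distrib[symmetric]
  by (rule arg_cong[where f = exp], rule sum.cong) (auto simp: algebra_simps)

lemma configs_mult: "\<tau> \<in> ising_configs \<Longrightarrow> \<xi> \<in> ising_configs \<Longrightarrow> (\<lambda>x. \<tau> x * \<xi> x) \<in> ising_configs"
  unfolding ising_configs_def by auto (metis mult_minus_left mult_1 mult_minus_right mult_1_right minus_minus)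

lemma sum_configs_reindex:
  assumes "\<tau> \<in> ising_configs"
  shows "(\<Sum>\<eta>\<in>ising_configs. g \<eta>) = (\<Sum>\<xi>\<in>ising_configs. g (\<lambda>x. \<tau> x * \<xi> x))"
proof (rule sum.reindex_bij_witness[where i = "\<lambda>\<eta> x. \<tau> x * \<eta> x" and j = "\<lambda>\<eta> x. \<tau> x * \<eta> x"])
  have sq: "\<tau> x * (\<tau> x * \<eta> x) = \<eta> x" for x \<eta>
    using spin_cases[OF assms, of x] by auto
  then have sq2: "(\<lambda>x. \<tau> x * (\<tau> x * a x)) = a" for a by auto
  show "\<And>a. a \<in> ising_configs \<Longrightarrow> (\<lambda>x. \<tau> x * (\<tau> x * a x)) = a" using sq2 by auto
  show "\<And>a. a \<in> ising_configs \<Longrightarrow> (\<lambda>x. \<tau> x * (\<tau> x * a x)) = a" using sq2 by auto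
  show "\<And>a. a \<in> ising_configs \<Longrightarrow> g (\<lambda>x. \<tau> x * (\<tau> x * a x)) = g a" using sq2 by auto
qed (use configs_mult assms in auto)

lemma ginibre:
  fixes J K :: "'a::{finite,linorder} \<Rightarrow> 'a \<Rightarrow> real"
  assumes JK: "\<And>x y. x < y \<Longrightarrow> \<bar>K x y\<bar> \<le> J x y"
  shows "\<bar>\<Sum>\<eta>\<in>ising_configs. spinmon m \<eta> * ising_weight K \<eta>\<bar>
     \<le> ising_expect J (spinmon m) * (\<Sum>\<eta>\<in>ising_configs. ising_weight K \<eta>)"
proof -
  let ?C = "ising_configs :: ('a \<Rightarrow> real) set"
  let ?f = "spinmon m"
  define NJ where "NJ = (\<Sum>\<tau>\<in>?C. ?f \<tau> * ising_weight J \<tau>)"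
  define ZJ where "ZJ = (\<Sum>\<tau>\<in>?C. ising_weight J \<tau>)"
  define AK where "AK = (\<Sum>\<tau>\<in>?C. ?f \<tau> * ising_weight K \<tau>)"
  define ZK where "ZK = (\<Sum>\<tau>\<in>?C. ising_weight K \<tau>)"
  have ZJ: "0 < ZJ" unfolding ZJ_def by (rule Z_ising_pos)
  have key: "0 \<le> NJ * ZK + s * (AK * ZJ)" if s: "s = 1 \<or> s = -1" for s
  proof -
    have "NJ * ZK + s * (AK * ZJ) = (\<Sum>\<tau>\<in>?C. \<Sum>\<eta>\<in>?C. (?f \<tau> + s * ?f \<eta>) * (ising_weight J \<tau> * ising_weight K \<eta>))"
    proof -
      have 1: "NJ * ZK = (\<Sum>\<tau>\<in>?C. \<Sum>\<eta>\<in>?C. ?f \<tau> * (ising_weight J \<tau> * ising_weight K \<eta>))"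
        unfolding NJ_def ZK_def sum_product by (simp add: algebra_simps)
      have 2: "AK * ZJ = (\<Sum>\<eta>\<in>?C. \<Sum>\<tau>\<in>?C. ?f \<eta> * (ising_weight J \<tau> * ising_weight K \<eta>))"
        unfolding AK_def ZJ_def sum_product by (simp add: algebra_simps)
      also have "\<dots> = (\<Sum>\<tau>\<in>?C. \<Sum>\<eta>\<in>?C. ?f \<eta> * (ising_weight J \<tau> * ising_weight K \<eta>))"
        by (rule sum.swap)
      finally have 3: "s * (AK * ZJ) = (\<Sum>\<tau>\<in>?C. \<Sum>\<eta>\<in>?C. s * ?f \<eta> * (ising_weight J \<tau> * ising_weight K \<eta>))"
        by (simp add: sum_distrib_left mult.assoc)
      show ?thesis unfolding 1 3 sum.distrib[symmetric] by (simp add: algebra_simps)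
    qed
    also have "\<dots> = (\<Sum>\<tau>\<in>?C. \<Sum>\<xi>\<in>?C. (1 + s * ?f \<xi>) * (?f \<tau> * ising_weight (\<lambda>x y. J x y + K x y * \<xi> x * \<xi> y) \<tau>))"
    proof (rule sum.cong[OF refl])
      fix \<tau> assume t: "\<tau> \<in> ?C"
      show "(\<Sum>\<eta>\<in>?C. (?f \<tau> + s * ?f \<eta>) * (ising_weight J \<tau> * ising_weight K \<eta>)) =
         (\<Sum>\<xi>\<in>?C. (1 + s * ?f \<xi>) * (?f \<tau> * ising_weight (\<lambda>x y. J x y + K x y * \<xi> x * \<xi> y) \<tau>))"
        by (subst sum_configs_reindex[OF t], rule sum.cong[OF refl],
            simp only: ising_weight_mult[symmetric] spinmon_mult, simp add: algebra_simps)
    qed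
    also have "\<dots> = (\<Sum>\<xi>\<in>?C. (1 + s * ?f \<xi>) * (\<Sum>\<tau>\<in>?C. ?f \<tau> * ising_weight (\<lambda>x y. J x y + K x y * \<xi> x * \<xi> y) \<tau>))"
      by (subst sum.swap) (simp add: sum_distrib_left)
    also have "0 \<le> \<dots>"
    proof (rule sum_nonneg, rule mult_nonneg_nonneg)
      fix \<xi> assume x: "\<xi> \<in> ?C"
      show "0 \<le> 1 + s * ?f \<xi>" using spinmon_abs[OF x, of m] s by (auto simp: abs_le_iff)
      show "0 \<le> (\<Sum>\<tau>\<in>?C. ?f \<tau> * ising_weight (\<lambda>x y. J x y + K x y * \<xi> x * \<xi> y) \<tau>)"
      proof (rule gks1)
        fix a b :: 'a assume ab: "a < b"
        have "\<bar>K a b * \<xi> a * \<xi> b\<bar> = \<bar>K a b\<bar>"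
          using spin_cases[OF x, of a] spin_cases[OF x, of b] by auto
        then show "0 \<le> J a b + K a b * \<xi> a * \<xi> b" using JK[OF ab] by linarith
      qed
    qed
    finally show ?thesis .
  qed
  have "\<bar>AK\<bar> * ZJ \<le> NJ * ZK" using key[of 1] key[of "-1"] ZJ by (auto simp: abs_if)
  then have "\<bar>AK\<bar> \<le> NJ / ZJ * ZK" using ZJ by (simp add: field_simps)
  then show ?thesis unfolding AK_def ising_expect_def NJ_def ZJ_def ZK_def .
qed


lemma prod_spinmon: fixes n :: nat and xs ys :: "nat \<Rightarrow> 'a::finite" shows "\<exists>m. \<forall>\<tau>::'a::finite \<Rightarrow> real. (\<Prod>i<n. \<tau> (xs i) * \<tau> (ys i)) = spinmon m \<tau>"
proof (induction n)
  case 0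
  show ?case by (rule exI[of _ "\<lambda>_. 0"]) (simp add: spinmon_def)
next
  case (Suc n)
  then obtain m where m: "\<forall>\<tau>::'a \<Rightarrow> real. (\<Prod>i<n. \<tau> (xs i) * \<tau> (ys i)) = spinmon m \<tau>" by blast
  let ?m1 = "m(xs n := Suc (m (xs n)))"
  show ?case
  proof (rule exI[of _ "?m1(ys n := Suc (?m1 (ys n)))"], intro allI)
    fix \<tau> :: "'a \<Rightarrow> real"
    have "(\<Prod>i<Suc n. \<tau> (xs i) * \<tau> (ys i)) = spinmon m \<tau> * \<tau> (xs n) * \<tau> (ys n)"
      using m by (simp add: mult.assoc)
    also have "\<dots> = spinmon (?m1(ys n := Suc (?m1 (ys n)))) \<tau>"
      by (simp only: spinmon_times)
    finally show "(\<Prod>i<Suc n. \<tau> (xs i) * \<tau> (ys i)) = spinmon (?m1(ys n := Suc (?m1 (ys n)))) \<tau>" .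
  qed
qed

lemma inner_meas:
  "(\<lambda>\<sigma>::'a \<Rightarrow> real^'n. \<sigma> x \<bullet> \<sigma> y) \<in> borel_measurable (Pi\<^sub>M UNIV (\<lambda>_. borel))"
  by measurable

lemma flip_meas:
  "(\<lambda>\<sigma> x. \<eta> x *\<^sub>R (\<sigma>::'a \<Rightarrow> real^'n) x) \<in> measurable (Pi\<^sub>M UNIV (\<lambda>_. borel)) (Pi\<^sub>M UNIV (\<lambda>_. borel))"
proof (rule measurable_PiM_single')
  fix x :: 'a
  have "(\<lambda>\<omega>::'a \<Rightarrow> real^'n. \<omega> x) \<in> borel_measurable (Pi\<^sub>M UNIV (\<lambda>_. borel))"
    by (rule measurable_component_singleton) simp
  then show "(\<lambda>\<omega>. \<eta> x *\<^sub>R (\<omega>::'a \<Rightarrow> real^'n) x) \<in> borel_measurable (Pi\<^sub>M UNIV (\<lambda>_. borel))"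
    by (intro borel_measurable_scaleR) auto
qed (auto simp: PiE_def extensional_def)

lemma ham_meas:
  fixes V :: "'a::{finite,linorder} \<Rightarrow> 'a \<Rightarrow> real \<Rightarrow> real"
  assumes V_meas: "\<And>x y. x < y \<Longrightarrow> V x y \<in> borel_measurable borel"
  shows "(hamiltonian V :: ('a \<Rightarrow> real^'n) \<Rightarrow> real) \<in> borel_measurable (Pi\<^sub>M UNIV (\<lambda>_. borel))"
proof -
  have "(\<lambda>\<sigma>::'a \<Rightarrow> real^'n. \<Sum>p\<in>{(x,y). x < y}. V (fst p) (snd p) (\<sigma> (fst p) \<bullet> \<sigma> (snd p)))
     \<in> borel_measurable (Pi\<^sub>M UNIV (\<lambda>_. borel))"
  proof (rule borel_measurable_sum)
    fix p :: "'a \<times> 'a" assume "p \<in> {(x,y). x < y}"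
    then have "fst p < snd p" by auto
    then show "(\<lambda>\<sigma>::'a \<Rightarrow> real^'n. V (fst p) (snd p) (\<sigma> (fst p) \<bullet> \<sigma> (snd p))) \<in> borel_measurable (Pi\<^sub>M UNIV (\<lambda>_. borel))"
      by (rule measurable_compose[OF inner_meas V_meas])
  qed
  then show ?thesis unfolding hamiltonian_def by (simp add: split_def)
qed

lemma V_spin: "t = 1 \<or> t = -1 \<Longrightarrow> v (t * s) = (v s + v (- s)) / 2 + Vminus v s * t"
  unfolding Vminus_def by (auto simp: field_simps)

lemma G_flip:
  fixes V :: "'a::{finite,linorder} \<Rightarrow> 'a \<Rightarrow> real \<Rightarrow> real" and \<sigma> :: "'a \<Rightarrow> real^'n"
  assumes "\<eta> \<in> ising_configs"
  shows "exp (- hamiltonian V (\<lambda>x. \<eta> x *\<^sub>R \<sigma> x))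
    = exp (\<Sum>(x,y)\<in>{(x,y). x < y}. (V x y (\<sigma> x \<bullet> \<sigma> y) + V x y (- (\<sigma> x \<bullet> \<sigma> y))) / 2)
      * ising_weight (\<lambda>x y. Vminus (V x y) (\<sigma> x \<bullet> \<sigma> y)) \<eta>"
proof -
  have "- hamiltonian V (\<lambda>x. \<eta> x *\<^sub>R \<sigma> x) = (\<Sum>(x,y)\<in>{(x,y). x < y}. V x y ((\<eta> x * \<eta> y) * (\<sigma> x \<bullet> \<sigma> y)))"
    unfolding hamiltonian_def by (simp add: mult.assoc mult.left_commute)
  also have "\<dots> = (\<Sum>(x,y)\<in>{(x,y). x < y}. (V x y (\<sigma> x \<bullet> \<sigma> y) + V x y (- (\<sigma> x \<bullet> \<sigma> y))) / 2
       + Vminus (V x y) (\<sigma> x \<bullet> \<sigma> y) * \<eta> x * \<eta> y)"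
  proof (rule sum.cong[OF refl], clarify)
    fix x y :: 'a
    have "\<eta> x * \<eta> y = 1 \<or> \<eta> x * \<eta> y = -1"
      using spin_cases[OF assms, of x] spin_cases[OF assms, of y] by auto
    from V_spin[OF this, of "V x y" "\<sigma> x \<bullet> \<sigma> y"]
    show "V x y ((\<eta> x * \<eta> y) * (\<sigma> x \<bullet> \<sigma> y)) = (V x y (\<sigma> x \<bullet> \<sigma> y) + V x y (- (\<sigma> x \<bullet> \<sigma> y))) / 2
       + Vminus (V x y) (\<sigma> x \<bullet> \<sigma> y) * \<eta> x * \<eta> y" by (simp add: mult.assoc)
  qed
  finally show ?thesis
    unfolding ising_weight_def by (simp add: sum.distrib exp_add split_def)
qed

lemma F_flip:
  fixes \<sigma> :: "'a \<Rightarrow> real^'n"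
  shows "(\<Prod>i<n. (\<eta> (xs i) *\<^sub>R \<sigma> (xs i)) \<bullet> (\<eta> (ys i) *\<^sub>R \<sigma> (ys i)))
     = (\<Prod>i<n. \<eta> (xs i) * \<eta> (ys i)) * (\<Prod>i<n. \<sigma> (xs i) \<bullet> \<sigma> (ys i))"
  by (simp add: prod.distrib[symmetric] mult.assoc mult.left_commute)

lemma A_flip:
  fixes \<sigma> :: "'a \<Rightarrow> real^'n"
  assumes "\<eta> \<in> ising_configs"
  shows "(\<Prod>i<n. \<bar>(\<eta> (xs i) *\<^sub>R \<sigma> (xs i)) \<bullet> (\<eta> (ys i) *\<^sub>R \<sigma> (ys i))\<bar>)
     = (\<Prod>i<n. \<bar>\<sigma> (xs i) \<bullet> \<sigma> (ys i)\<bar>)"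
proof (rule prod.cong[OF refl])
  fix i
  have "\<bar>\<eta> (xs i)\<bar> = 1" "\<bar>\<eta> (ys i)\<bar> = 1"
    using spin_cases[OF assms, of "xs i"] spin_cases[OF assms, of "ys i"] by auto
  then show "\<bar>(\<eta> (xs i) *\<^sub>R \<sigma> (xs i)) \<bullet> (\<eta> (ys i) *\<^sub>R \<sigma> (ys i))\<bar> = \<bar>\<sigma> (xs i) \<bullet> \<sigma> (ys i)\<bar>"
    by (simp add: abs_mult)
qed

theorem theoremC5:
  fixes V :: "'a::{finite,linorder} \<Rightarrow> 'a \<Rightarrow> real \<Rightarrow> real"
    and \<mu> :: "('a \<Rightarrow> real^'n) measure"
    and n :: nat and xs ys :: "nat \<Rightarrow> 'a"
  assumes V_meas: "\<And>x y. x < y \<Longrightarrow> V x y \<in> borel_measurable borel"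
    and V_bdd: "\<And>x y. x < y \<Longrightarrow> bdd_above ((\<lambda>s. \<bar>Vminus (V x y) s\<bar>) ` {-1..1})"
    and sets_mu: "sets \<mu> = sets (Pi\<^sub>M UNIV (\<lambda>_. borel))"
    and sphere: "AE \<sigma> in \<mu>. \<forall>x. norm (\<sigma> x) = 1"
    and flip_inv: "\<And>\<eta>::'a \<Rightarrow> real. (\<forall>x. \<eta> x = 1 \<or> \<eta> x = -1) \<Longrightarrow>
                     distr \<mu> \<mu> (\<lambda>\<sigma> x. \<eta> x *\<^sub>R \<sigma> x) = \<mu>"
    and Z_pos: "0 < partition_fn \<mu> (hamiltonian V)"
    and Z_fin: "partition_fn \<mu> (hamiltonian V) < \<infinity>"
  shows
    "\<bar>gibbs_expect \<mu> (hamiltonian V) (\<lambda>\<sigma>. \<Prod>i<n. \<sigma> (xs i) \<bullet> \<sigma> (ys i))\<bar>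
       \<le> ising_expect (Jcoupling V) (\<lambda>\<epsilon>. \<Prod>i<n. \<epsilon> (xs i) * \<epsilon> (ys i))
         * gibbs_expect \<mu> (hamiltonian V) (\<lambda>\<sigma>. \<Prod>i<n. \<bar>\<sigma> (xs i) \<bullet> \<sigma> (ys i)\<bar>)
     \<and> ising_expect (Jcoupling V) (\<lambda>\<epsilon>. \<Prod>i<n. \<epsilon> (xs i) * \<epsilon> (ys i))
         * gibbs_expect \<mu> (hamiltonian V) (\<lambda>\<sigma>. \<Prod>i<n. \<bar>\<sigma> (xs i) \<bullet> \<sigma> (ys i)\<bar>)
       \<le> ising_expect (Jcoupling V) (\<lambda>\<epsilon>. \<Prod>i<n. \<epsilon> (xs i) * \<epsilon> (ys i))
         * sqrt (gibbs_expect \<mu> (hamiltonian V) (\<lambda>\<sigma>. \<Prod>i<n. (\<sigma> (xs i) \<bullet> \<sigma> (ys i))\<^sup>2))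
     \<and> ising_expect (Jcoupling V) (\<lambda>\<epsilon>. \<Prod>i<n. \<epsilon> (xs i) * \<epsilon> (ys i))
         * sqrt (gibbs_expect \<mu> (hamiltonian V) (\<lambda>\<sigma>. \<Prod>i<n. (\<sigma> (xs i) \<bullet> \<sigma> (ys i))\<^sup>2))
       \<le> ising_expect (Jcoupling V) (\<lambda>\<epsilon>. \<Prod>i<n. \<epsilon> (xs i) * \<epsilon> (ys i))"
proof -
  let ?M0 = "Pi\<^sub>M UNIV (\<lambda>_. borel) :: ('a \<Rightarrow> real^'n) measure"
  let ?C = "ising_configs :: ('a \<Rightarrow> real) set"
  let ?T = "\<lambda>(\<eta>::'a \<Rightarrow> real) (\<sigma>::'a \<Rightarrow> real^'n) x. \<eta> x *\<^sub>R \<sigma> x"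
  have mm: "measurable \<mu> N = measurable ?M0 N" for N :: "real measure"
    by (rule measurable_cong_sets[OF sets_mu refl])
  have mT: "?T \<eta> \<in> measurable \<mu> \<mu>" for \<eta>
    using flip_meas[of \<eta>] measurable_cong_sets[OF sets_mu sets_mu] by simp
  define G where "G = (\<lambda>\<sigma>::'a \<Rightarrow> real^'n. exp (- hamiltonian V \<sigma>))"
  define F where "F = (\<lambda>\<sigma>::'a \<Rightarrow> real^'n. \<Prod>i<n. \<sigma> (xs i) \<bullet> \<sigma> (ys i))"
  define A where "A = (\<lambda>\<sigma>::'a \<Rightarrow> real^'n. \<Prod>i<n. \<bar>\<sigma> (xs i) \<bullet> \<sigma> (ys i)\<bar>)"
  define Q where "Q = (\<lambda>\<sigma>::'a \<Rightarrow> real^'n. \<Prod>i<n. (\<sigma> (xs i) \<bullet> \<sigma> (ys i))\<^sup>2)"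
  define I where "I = ising_expect (Jcoupling V) (\<lambda>\<epsilon>. \<Prod>i<n. \<epsilon> (xs i) * \<epsilon> (ys i))"
  have Hm: "hamiltonian V \<in> borel_measurable \<mu>" using ham_meas[OF V_meas] mm by simp
  have im[measurable]: "(\<lambda>\<sigma>. \<sigma> x \<bullet> \<sigma> y) \<in> borel_measurable \<mu>" for x y
    using inner_meas[of x y] mm by simp
  have Gm[measurable]: "G \<in> borel_measurable \<mu>" unfolding G_def using Hm by measurable
  have Fm[measurable]: "F \<in> borel_measurable \<mu>" unfolding F_def by measurable
  have Am[measurable]: "A \<in> borel_measurable \<mu>" unfolding A_def by measurable
  have Qm[measurable]: "Q \<in> borel_measurable \<mu>" unfolding Q_def by measurable
  have Gpos: "0 < G \<sigma>" for \<sigma> unfolding G_def by simp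
  have Gint: "integrable \<mu> G"
    by (rule integrableI_nonneg[OF Gm]) (use Gpos Z_fin in \<open>auto simp: partition_fn_def G_def less_imp_le\<close>)
  have Zeq: "enn2real (partition_fn \<mu> (hamiltonian V)) = (\<integral>\<sigma>. G \<sigma> \<partial>\<mu>)"
    unfolding partition_fn_def G_def
    by (rule integral_eq_nn_integral[symmetric]) (use Hm Gpos[unfolded G_def] in \<open>auto intro: less_imp_le\<close>)
  define Z where "Z = (\<integral>\<sigma>. G \<sigma> \<partial>\<mu>)"
  have Zpos: "0 < Z" unfolding Z_def Zeq[symmetric] using Z_pos Z_fin by (simp add: enn2real_positive_iff)
  have gibbs: "gibbs_expect \<mu> (hamiltonian V) h = (\<integral>\<sigma>. h \<sigma> * G \<sigma> \<partial>\<mu>) / Z" for h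
    unfolding gibbs_expect_def Zeq Z_def G_def ..
  have bnd: "AE \<sigma> in \<mu>. \<forall>x y. \<bar>\<sigma> x \<bullet> \<sigma> y\<bar> \<le> 1"
    using sphere by eventually_elim (metis Cauchy_Schwarz_ineq2 mult_1_right)
  have intb: "integrable \<mu> (\<lambda>\<sigma>. h \<sigma> * G \<sigma>)"
    if hm: "h \<in> borel_measurable \<mu>" and hb: "AE \<sigma> in \<mu>. \<bar>h \<sigma>\<bar> \<le> 1" for h
  proof (rule Bochner_Integration.integrable_bound[OF Gint])
    show "(\<lambda>\<sigma>. h \<sigma> * G \<sigma>) \<in> borel_measurable \<mu>" using hm by measurable
    show "AE \<sigma> in \<mu>. norm (h \<sigma> * G \<sigma>) \<le> norm (G \<sigma>)"
      using hb
    proof eventually_elim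
      case (elim \<sigma>)
      then show ?case using Gpos[of \<sigma>] by (simp add: abs_mult mult_left_le_one_le)
    qed
  qed
  have Ab: "0 \<le> A \<sigma> \<and> A \<sigma> \<le> 1" if "\<forall>x y. \<bar>\<sigma> x \<bullet> \<sigma> y\<bar> \<le> 1" for \<sigma>
    unfolding A_def using that by (auto intro: prod_nonneg prod_le_1)
  have FA: "\<bar>F \<sigma>\<bar> = A \<sigma>" for \<sigma> unfolding F_def A_def by (simp add: abs_prod)
  have QA: "Q \<sigma> = (A \<sigma>)\<^sup>2" for \<sigma> unfolding Q_def A_def by (simp add: prod_power_distrib)
  have AEA: "AE \<sigma> in \<mu>. 0 \<le> A \<sigma> \<and> A \<sigma> \<le> 1" using bnd by eventually_elim (rule Ab)
  have FGi: "integrable \<mu> (\<lambda>\<sigma>. F \<sigma> * G \<sigma>)"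
    by (rule intb) (use AEA FA in \<open>auto elim: AE_mp\<close>)
  have AGi: "integrable \<mu> (\<lambda>\<sigma>. A \<sigma> * G \<sigma>)"
    by (rule intb) (use AEA in \<open>auto elim: AE_mp\<close>)
  have QGi: "integrable \<mu> (\<lambda>\<sigma>. Q \<sigma> * G \<sigma>)"
  proof (rule intb[OF Qm])
    show "AE \<sigma> in \<mu>. \<bar>Q \<sigma>\<bar> \<le> 1" using AEA
      by eventually_elim (simp add: QA power_le_one)
  qed
  have flipinv: "distr \<mu> \<mu> (?T \<eta>) = \<mu>" if "\<eta> \<in> ?C" for \<eta>
    using flip_inv[of \<eta>] that unfolding ising_configs_def by auto
  have inv: "(\<integral>\<sigma>. h \<sigma> \<partial>\<mu>) = (\<integral>\<sigma>. h (?T \<eta> \<sigma>) \<partial>\<mu>)"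
    if "\<eta> \<in> ?C" "h \<in> borel_measurable \<mu>" for \<eta> and h :: "('a \<Rightarrow> real^'n) \<Rightarrow> real"
    using integral_distr[OF mT[of \<eta>] that(2)] flipinv[OF that(1)] by simp
  have intinv: "integrable \<mu> (\<lambda>\<sigma>. h (?T \<eta> \<sigma>))"
    if "\<eta> \<in> ?C" "integrable \<mu> h" for \<eta> and h :: "('a \<Rightarrow> real^'n) \<Rightarrow> real"
    using integrable_distr_eq[OF mT[of \<eta>] borel_measurable_integrable[OF that(2)]] flipinv[OF that(1)] that(2)
    by simp
  define NC where "NC = real (card ?C)"
  have NCpos: "0 < NC" unfolding NC_def using configs_finite configs_ne
    by (metis card_gt_0_iff empty_iff of_nat_0_less_iff)
  have sumint: "NC * (\<integral>\<sigma>. h \<sigma> \<partial>\<mu>) = (\<integral>\<sigma>. (\<Sum>\<eta>\<in>?C. h (?T \<eta> \<sigma>)) \<partial>\<mu>)"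
    if "integrable \<mu> h" for h :: "('a \<Rightarrow> real^'n) \<Rightarrow> real"
  proof -
    have "(\<integral>\<sigma>. (\<Sum>\<eta>\<in>?C. h (?T \<eta> \<sigma>)) \<partial>\<mu>) = (\<Sum>\<eta>\<in>?C. (\<integral>\<sigma>. h (?T \<eta> \<sigma>) \<partial>\<mu>))"
      by (rule Bochner_Integration.integral_sum) (rule intinv[OF _ that])
    also have "\<dots> = (\<Sum>\<eta>\<in>?C. (\<integral>\<sigma>. h \<sigma> \<partial>\<mu>))"
      by (rule sum.cong[OF refl], rule inv[symmetric]) (use borel_measurable_integrable[OF that] in auto)
    finally show ?thesis unfolding NC_def by simp
  qed
  obtain m where m: "\<forall>\<tau>::'a \<Rightarrow> real. (\<Prod>i<n. \<tau> (xs i) * \<tau> (ys i)) = spinmon m \<tau>"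
    using prod_spinmon by blast
  have Im: "I = ising_expect (Jcoupling V) (spinmon m)"
    unfolding I_def using m by metis
  have JK: "\<bar>Vminus (V x y) s\<bar> \<le> Jcoupling V x y" if "x < y" "\<bar>s\<bar> \<le> 1" for x y s
    unfolding Jcoupling_def
    by (rule cSUP_upper[OF _ V_bdd[OF that(1)]]) (use that(2) in auto)
  have ptw: "AE \<sigma> in \<mu>. \<bar>\<Sum>\<eta>\<in>?C. F (?T \<eta> \<sigma>) * G (?T \<eta> \<sigma>)\<bar>
      \<le> I * (\<Sum>\<eta>\<in>?C. A (?T \<eta> \<sigma>) * G (?T \<eta> \<sigma>))"
    using bnd
  proof eventually_elim
    case (elim \<sigma>)
    define K where "K = (\<lambda>x y. Vminus (V x y) (\<sigma> x \<bullet> \<sigma> y))"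
    define P where "P = exp (\<Sum>(x,y)\<in>{(x,y). x < y}. (V x y (\<sigma> x \<bullet> \<sigma> y) + V x y (- (\<sigma> x \<bullet> \<sigma> y))) / 2)"
    have GT: "G (?T \<eta> \<sigma>) = P * ising_weight K \<eta>" if "\<eta> \<in> ?C" for \<eta>
      unfolding G_def P_def K_def by (rule G_flip[OF that])
    have FT: "F (?T \<eta> \<sigma>) = spinmon m \<eta> * F \<sigma>" for \<eta>
      unfolding F_def using F_flip[of \<eta> xs \<sigma> ys n] m by simp
    have AT: "A (?T \<eta> \<sigma>) = A \<sigma>" if "\<eta> \<in> ?C" for \<eta>
      unfolding A_def using A_flip[OF that, of xs \<sigma> ys n] by simp
    have e1: "(\<Sum>\<eta>\<in>?C. F (?T \<eta> \<sigma>) * G (?T \<eta> \<sigma>)) = F \<sigma> * P * (\<Sum>\<eta>\<in>?C. spinmon m \<eta> * ising_weight K \<eta>)"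
      unfolding sum_distrib_left by (rule sum.cong[OF refl]) (simp add: GT FT)
    have e2: "(\<Sum>\<eta>\<in>?C. A (?T \<eta> \<sigma>) * G (?T \<eta> \<sigma>)) = A \<sigma> * P * (\<Sum>\<eta>\<in>?C. ising_weight K \<eta>)"
      unfolding sum_distrib_left by (rule sum.cong[OF refl]) (simp add: GT AT)
    have gin: "\<bar>\<Sum>\<eta>\<in>?C. spinmon m \<eta> * ising_weight K \<eta>\<bar> \<le> I * (\<Sum>\<eta>\<in>?C. ising_weight K \<eta>)"
      unfolding Im by (rule ginibre) (use JK elim in \<open>auto simp: K_def\<close>)
    have P0: "0 < P" unfolding P_def by simp
    have "\<bar>F \<sigma> * P * (\<Sum>\<eta>\<in>?C. spinmon m \<eta> * ising_weight K \<eta>)\<bar>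
        = A \<sigma> * P * \<bar>\<Sum>\<eta>\<in>?C. spinmon m \<eta> * ising_weight K \<eta>\<bar>"
      using P0 by (simp add: abs_mult FA)
    also have "\<dots> \<le> A \<sigma> * P * (I * (\<Sum>\<eta>\<in>?C. ising_weight K \<eta>))"
      by (rule mult_left_mono[OF gin]) (use Ab[OF elim] P0 in auto)
    finally show ?case unfolding e1 e2 by (simp add: algebra_simps)
  qed
  have FGT: "integrable \<mu> (\<lambda>\<sigma>. \<Sum>\<eta>\<in>?C. F (?T \<eta> \<sigma>) * G (?T \<eta> \<sigma>))"
    by (rule Bochner_Integration.integrable_sum) (rule intinv[OF _ FGi])
  have AGT: "integrable \<mu> (\<lambda>\<sigma>. I * (\<Sum>\<eta>\<in>?C. A (?T \<eta> \<sigma>) * G (?T \<eta> \<sigma>)))"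
    by (intro Bochner_Integration.integrable_mult_right Bochner_Integration.integrable_sum) (rule intinv[OF _ AGi])
  have "NC * \<bar>\<integral>\<sigma>. F \<sigma> * G \<sigma> \<partial>\<mu>\<bar> = \<bar>\<integral>\<sigma>. (\<Sum>\<eta>\<in>?C. F (?T \<eta> \<sigma>) * G (?T \<eta> \<sigma>)) \<partial>\<mu>\<bar>"
    using sumint[OF FGi] NCpos by (metis abs_mult abs_of_pos)
  also have "\<dots> \<le> (\<integral>\<sigma>. I * (\<Sum>\<eta>\<in>?C. A (?T \<eta> \<sigma>) * G (?T \<eta> \<sigma>)) \<partial>\<mu>)"
  proof -
    have "(\<integral>\<sigma>. (\<Sum>\<eta>\<in>?C. F (?T \<eta> \<sigma>) * G (?T \<eta> \<sigma>)) \<partial>\<mu>) \<le> (\<integral>\<sigma>. I * (\<Sum>\<eta>\<in>?C. A (?T \<eta> \<sigma>) * G (?T \<eta> \<sigma>)) \<partial>\<mu>)"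
      by (rule integral_mono_AE[OF FGT AGT]) (use ptw in \<open>eventually_elim; simp add: abs_le_iff\<close>)
    moreover have "(\<integral>\<sigma>. - (\<Sum>\<eta>\<in>?C. F (?T \<eta> \<sigma>) * G (?T \<eta> \<sigma>)) \<partial>\<mu>) \<le> (\<integral>\<sigma>. I * (\<Sum>\<eta>\<in>?C. A (?T \<eta> \<sigma>) * G (?T \<eta> \<sigma>)) \<partial>\<mu>)"
      by (rule integral_mono_AE[OF Bochner_Integration.integrable_minus[OF FGT] AGT]) (use ptw in \<open>eventually_elim; simp add: abs_le_iff\<close>)
    ultimately show ?thesis by (simp add: abs_le_iff)
  qed
  also have "\<dots> = I * (NC * (\<integral>\<sigma>. A \<sigma> * G \<sigma> \<partial>\<mu>))"
    using sumint[OF AGi] by simp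
  finally have main1: "\<bar>\<integral>\<sigma>. F \<sigma> * G \<sigma> \<partial>\<mu>\<bar> \<le> I * (\<integral>\<sigma>. A \<sigma> * G \<sigma> \<partial>\<mu>)"
    using NCpos by (simp add: algebra_simps)
  have I0: "0 \<le> I"
  proof -
    have J0: "0 \<le> Jcoupling V x y" if "x < y" for x y
      using JK[OF that, of 0] by linarith
    show ?thesis unfolding Im ising_expect_def
      by (rule divide_nonneg_pos[OF gks1 Z_ising_pos]) (rule J0)
  qed
  define a where "a = (\<integral>\<sigma>. A \<sigma> * G \<sigma> \<partial>\<mu>) / Z"
  define q where "q = (\<integral>\<sigma>. Q \<sigma> * G \<sigma> \<partial>\<mu>) / Z"
  have c1: "\<bar>gibbs_expect \<mu> (hamiltonian V) F\<bar> \<le> I * a"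
    unfolding gibbs a_def using main1 Zpos by (simp add: divide_right_mono)
  have a0: "0 \<le> a" unfolding a_def
  proof (rule divide_nonneg_pos[OF integral_nonneg_AE Zpos])
    show "AE \<sigma> in \<mu>. 0 \<le> A \<sigma> * G \<sigma>" using AEA
      by eventually_elim (use Gpos in \<open>auto intro: less_imp_le mult_nonneg_nonneg\<close>)
  qed
  have "0 \<le> (\<integral>\<sigma>. (A \<sigma> - a)\<^sup>2 * G \<sigma> \<partial>\<mu>)"
    by (rule integral_nonneg_AE, rule AE_I2, rule mult_nonneg_nonneg[OF zero_le_power2 less_imp_le[OF Gpos]])
  also have "(\<integral>\<sigma>. (A \<sigma> - a)\<^sup>2 * G \<sigma> \<partial>\<mu>) = (\<integral>\<sigma>. Q \<sigma> * G \<sigma> - (2 * a) * (A \<sigma> * G \<sigma>) + a\<^sup>2 * G \<sigma> \<partial>\<mu>)"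
    by (rule Bochner_Integration.integral_cong[OF refl]) (simp add: QA power2_eq_square algebra_simps)
  also have "\<dots> = Z * q - 2 * a * (Z * a) + a\<^sup>2 * Z"
    using QGi AGi Gint Zpos by (simp add: q_def a_def Z_def)
  finally have "a\<^sup>2 \<le> q" using Zpos by (simp add: power2_eq_square algebra_simps)
  then have c2: "a \<le> sqrt q" by (rule real_le_rsqrt)
  have "(\<integral>\<sigma>. Q \<sigma> * G \<sigma> \<partial>\<mu>) \<le> (\<integral>\<sigma>. G \<sigma> \<partial>\<mu>)"
    by (rule integral_mono_AE[OF QGi Gint])
      (use AEA in \<open>eventually_elim; use Gpos in \<open>auto simp: QA power_le_one mult_left_le_one_le less_imp_le\<close>\<close>)
  then have "q \<le> 1" unfolding q_def using Zpos by (simp add: Z_def)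
  then have c3: "sqrt q \<le> 1" by simp
  have "I * a \<le> I * sqrt q" using c2 I0 by (rule mult_left_mono[OF _ ]) 
  moreover have "I * sqrt q \<le> I" using c3 I0 by (simp add: mult_left_le)
  ultimately show ?thesis using c1
    unfolding I_def a_def q_def gibbs[symmetric] F_def A_def Q_def by simp
qed

end
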